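(* Let $\mathcal{Q}$ be a poset and let $M,N$ be finitely encoded persistence modules over $\mathcal{Q}$. Then there exist a finite poset $\mathcal P$, an order-preserving map $e\colon\mathcal{Q}\to\mathcal P$, pointwise finite-dimensional modules $M'',N''\colon\mathcal P\to\mathrm{Vect}$ and isomorphisms $M\cong e^*M''$ and $N\cong e^*N''$. Furthermore, if $M$ and $N$ both admit finite encodings of class $\mathfrak X$ for an algebra $\mathfrak X$ on $\mathcal{Q}$, then $e$ can be chosen so that all its fibers belong to $\mathfrak X$.
   Context: $\mathrm{Vect}$ is the category of finite-dimensional vector spaces over a field; a persistence module over $\mathcal{Q}$ is a functor $\mathcal{Q}\to\mathrm{Vect}$. A finite encoding of $M$ is an order-preserving map $e\colon\mathcal{Q}\to\mathcal P$ with $\mathcal P$ a finite poset, a pointwise finite-dimensional $M'\colon\mathcal P\to\mathrm{Vect}$ and an isomorphism $M\cong e^*M'=M'\circ e$; $M$ is finitely encoded if it admits one. An algebra on $\mathcal{Q}$ is a family of subsets containing $\emptyset$, closed under complements and finite unions; the encoding is of class $\mathfrak X$ if every fiber $e^{-1}(p)$ belongs to $\mathfrak X$. *)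

theory Defs
  imports Main
begin

definition poset_on :: "'a set \<Rightarrow> ('a \<Rightarrow> 'a \<Rightarrow> bool) \<Rightarrow> bool" where
  "poset_on S le \<longleftrightarrow>
     (\<forall>x\<in>S. le x x) \<and>
     (\<forall>x\<in>S. \<forall>y\<in>S. le x y \<and> le y x \<longrightarrow> x = y) \<and>
     (\<forall>x\<in>S. \<forall>y\<in>S. \<forall>z\<in>S. le x y \<and> le y z \<longrightarrow> le x z)"

text \<open>Finite-dimensional vector spaces over a field 'k are represented (up to isomorphism)
by the coordinate spaces k^n, realised as functions nat => 'k vanishing from index n on.\<close>

definition kvec :: "nat \<Rightarrow> (nat \<Rightarrow> 'k::field) set" where
  "kvec n = {v. \<forall>i\<ge>n. v i = 0}"

definition linear_on :: "(nat \<Rightarrow> 'k::field) set \<Rightarrow> ((nat \<Rightarrow> 'k) \<Rightarrow> (nat \<Rightarrow> 'k)) \<Rightarrow> bool" where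
  "linear_on V g \<longleftrightarrow>
     (\<forall>u\<in>V. \<forall>v\<in>V. g (\<lambda>i. u i + v i) = (\<lambda>i. g u i + g v i)) \<and>
     (\<forall>c. \<forall>v\<in>V. g (\<lambda>i. c * v i) = (\<lambda>i. c * g v i))"

text \<open>A persistence module: a dimension at every point, and a structure map for every
pair (only used when x <= y).\<close>

type_synonym ('a, 'k) pmod = "('a \<Rightarrow> nat) \<times> ('a \<Rightarrow> 'a \<Rightarrow> (nat \<Rightarrow> 'k) \<Rightarrow> (nat \<Rightarrow> 'k))"

definition is_pmod :: "'a set \<Rightarrow> ('a \<Rightarrow> 'a \<Rightarrow> bool) \<Rightarrow> ('a, 'k::field) pmod \<Rightarrow> bool" where
  "is_pmod S le M \<longleftrightarrow>
     (\<forall>x\<in>S. \<forall>y\<in>S. le x y \<longrightarrow>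
        linear_on (kvec (fst M x)) (snd M x y) \<and> snd M x y ` kvec (fst M x) \<subseteq> kvec (fst M y)) \<and>
     (\<forall>x\<in>S. \<forall>v\<in>kvec (fst M x). snd M x x v = v) \<and>
     (\<forall>x\<in>S. \<forall>y\<in>S. \<forall>z\<in>S. le x y \<and> le y z \<longrightarrow>
        (\<forall>v\<in>kvec (fst M x). snd M y z (snd M x y v) = snd M x z v))"

definition pmod_iso :: "'a set \<Rightarrow> ('a \<Rightarrow> 'a \<Rightarrow> bool) \<Rightarrow> ('a, 'k::field) pmod \<Rightarrow> ('a, 'k) pmod \<Rightarrow> bool" where
  "pmod_iso S le M N \<longleftrightarrow>
     (\<exists>\<phi>. (\<forall>x\<in>S. linear_on (kvec (fst M x)) (\<phi> x) \<and>
                   bij_betw (\<phi> x) (kvec (fst M x)) (kvec (fst N x))) \<and>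
          (\<forall>x\<in>S. \<forall>y\<in>S. le x y \<longrightarrow>
             (\<forall>v\<in>kvec (fst M x). \<phi> y (snd M x y v) = snd N x y (\<phi> x v))))"

definition order_preserving :: "'a set \<Rightarrow> ('a \<Rightarrow> 'a \<Rightarrow> bool) \<Rightarrow> 'b set \<Rightarrow> ('b \<Rightarrow> 'b \<Rightarrow> bool)
     \<Rightarrow> ('a \<Rightarrow> 'b) \<Rightarrow> bool" where
  "order_preserving S le P leP e \<longleftrightarrow>
     (\<forall>x\<in>S. e x \<in> P) \<and> (\<forall>x\<in>S. \<forall>y\<in>S. le x y \<longrightarrow> leP (e x) (e y))"

definition pullback :: "('a \<Rightarrow> 'b) \<Rightarrow> ('b, 'k) pmod \<Rightarrow> ('a, 'k) pmod" where
  "pullback e M' = (\<lambda>x. fst M' (e x), \<lambda>x y. snd M' (e x) (e y))"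

definition finite_encoding :: "'a set \<Rightarrow> ('a \<Rightarrow> 'a \<Rightarrow> bool) \<Rightarrow> ('a, 'k::field) pmod
     \<Rightarrow> nat set \<Rightarrow> (nat \<Rightarrow> nat \<Rightarrow> bool) \<Rightarrow> ('a \<Rightarrow> nat) \<Rightarrow> (nat, 'k) pmod \<Rightarrow> bool" where
  "finite_encoding S le M P leP e M' \<longleftrightarrow>
     finite P \<and> poset_on P leP \<and> order_preserving S le P leP e \<and>
     is_pmod P leP M' \<and> pmod_iso S le M (pullback e M')"

definition finitely_encoded :: "'a set \<Rightarrow> ('a \<Rightarrow> 'a \<Rightarrow> bool) \<Rightarrow> ('a, 'k::field) pmod \<Rightarrow> bool" where
  "finitely_encoded S le M \<longleftrightarrow> (\<exists>P leP e M'. finite_encoding S le M P leP e M')"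

definition algebra_on :: "'a set \<Rightarrow> 'a set set \<Rightarrow> bool" where
  "algebra_on S X \<longleftrightarrow> X \<subseteq> Pow S \<and> {} \<in> X \<and> (\<forall>A\<in>X. S - A \<in> X) \<and>
     (\<forall>A\<in>X. \<forall>B\<in>X. A \<union> B \<in> X)"

definition fibers_in :: "'a set \<Rightarrow> 'a set set \<Rightarrow> nat set \<Rightarrow> ('a \<Rightarrow> nat) \<Rightarrow> bool" where
  "fibers_in S X P e \<longleftrightarrow> (\<forall>p\<in>P. {x\<in>S. e x = p} \<in> X)"

definition finitely_encoded_class :: "'a set \<Rightarrow> ('a \<Rightarrow> 'a \<Rightarrow> bool) \<Rightarrow> 'a set set
     \<Rightarrow> ('a, 'k::field) pmod \<Rightarrow> bool" where
  "finitely_encoded_class S le X M \<longleftrightarrow>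
     (\<exists>P leP e M'. finite_encoding S le M P leP e M' \<and> fibers_in S X P e)"

end

theory Submission
  imports Defs "HOL-Library.Nat_Bijection"
begin

lemma algebra_inter:
  assumes "algebra_on S X" "A \<in> X" "B \<in> X" shows "A \<inter> B \<in> X"
proof -
  have sub: "A \<subseteq> S" "B \<subseteq> S" using assms unfolding algebra_on_def by auto
  have "S - ((S - A) \<union> (S - B)) \<in> X" using assms unfolding algebra_on_def by blast
  moreover have "S - ((S - A) \<union> (S - B)) = A \<inter> B" using sub by blast
  ultimately show ?thesis by simp
qed

definition pfst :: "nat \<Rightarrow> nat" where "pfst x = fst (prod_decode x)"
definition psnd :: "nat \<Rightarrow> nat" where "psnd x = snd (prod_decode x)"

lemma pfst_enc[simp]: "pfst (prod_encode (a,b)) = a" by (simp add: pfst_def)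
lemma psnd_enc[simp]: "psnd (prod_encode (a,b)) = b" by (simp add: psnd_def)

lemma combine:
  fixes M N :: "('q, 'k::field) pmod"
  assumes e1: "finite_encoding Q le M P1 l1 e1 M1"
    and e2: "finite_encoding Q le N P2 l2 e2 N1"
  shows "\<exists>(P::nat set) leP e M'' N''.
               finite P \<and> poset_on P leP \<and> order_preserving Q le P leP e \<and>
               is_pmod P leP M'' \<and> is_pmod P leP N'' \<and>
               pmod_iso Q le M (pullback e M'') \<and> pmod_iso Q le N (pullback e N'') \<and>
               (\<forall>X. algebra_on Q X \<longrightarrow> fibers_in Q X P1 e1 \<longrightarrow> fibers_in Q X P2 e2
                  \<longrightarrow> fibers_in Q X P e)"
proof -
  define P where "P = prod_encode ` (P1 \<times> P2)"
  define leP where "leP = (\<lambda>x y. l1 (pfst x) (pfst y) \<and> l2 (psnd x) (psnd y))"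
  define e where "e = (\<lambda>q. prod_encode (e1 q, e2 q))"
  define M'' where "M'' = (\<lambda>x. fst M1 (pfst x), \<lambda>x y. snd M1 (pfst x) (pfst y))"
  define N'' where "N'' = (\<lambda>x. fst N1 (psnd x), \<lambda>x y. snd N1 (psnd x) (psnd y))"
  have f1: "finite P1" "poset_on P1 l1" "order_preserving Q le P1 l1 e1" "is_pmod P1 l1 M1"
      "pmod_iso Q le M (pullback e1 M1)" using e1 unfolding finite_encoding_def by auto
  have f2: "finite P2" "poset_on P2 l2" "order_preserving Q le P2 l2 e2" "is_pmod P2 l2 N1"
      "pmod_iso Q le N (pullback e2 N1)" using e2 unfolding finite_encoding_def by auto
  have memP: "x \<in> P \<Longrightarrow> pfst x \<in> P1 \<and> psnd x \<in> P2" for x unfolding P_def by auto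
  have memP2: "x \<in> P \<Longrightarrow> x = prod_encode (pfst x, psnd x)" for x unfolding P_def by auto
  have "finite P" unfolding P_def using f1(1) f2(1) by simp
  moreover have "poset_on P leP"
  proof -
    have "\<forall>x\<in>P. \<forall>y\<in>P. leP x y \<and> leP y x \<longrightarrow> x = y"
    proof (intro ballI impI)
      fix x y assume xy: "x \<in> P" "y \<in> P" "leP x y \<and> leP y x"
      have "pfst x = pfst y" using f1(2) memP[OF xy(1)] memP[OF xy(2)] xy(3)
        unfolding poset_on_def leP_def by blast
      moreover have "psnd x = psnd y" using f2(2) memP[OF xy(1)] memP[OF xy(2)] xy(3)
        unfolding poset_on_def leP_def by blast
      ultimately show "x = y" using memP2[OF xy(1)] memP2[OF xy(2)] by metis
    qed
    moreover have "\<forall>x\<in>P. leP x x" using f1(2) f2(2) memP unfolding poset_on_def leP_def by blast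
    moreover have "\<forall>x\<in>P. \<forall>y\<in>P. \<forall>z\<in>P. leP x y \<and> leP y z \<longrightarrow> leP x z"
      using f1(2) f2(2) memP unfolding poset_on_def leP_def by meson
    ultimately show ?thesis unfolding poset_on_def by blast
  qed
  moreover have "order_preserving Q le P leP e"
    using f1(3) f2(3) unfolding order_preserving_def P_def leP_def e_def by auto
  moreover have "is_pmod P leP M''"
    using f1(4) memP unfolding is_pmod_def M''_def leP_def by (simp; meson)
  moreover have "is_pmod P leP N''"
    using f2(4) memP unfolding is_pmod_def N''_def leP_def by (simp; meson)
  moreover have "pullback e M'' = pullback e1 M1"
    unfolding pullback_def e_def M''_def by simp
  moreover have "pullback e N'' = pullback e2 N1"
    unfolding pullback_def e_def N''_def by simp
  moreover have "\<forall>X. algebra_on Q X \<longrightarrow> fibers_in Q X P1 e1 \<longrightarrow> fibers_in Q X P2 e2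
                  \<longrightarrow> fibers_in Q X P e"
  proof (intro allI impI)
    fix X assume X: "algebra_on Q X" "fibers_in Q X P1 e1" "fibers_in Q X P2 e2"
    show "fibers_in Q X P e" unfolding fibers_in_def
    proof
      fix p assume "p \<in> P"
      then obtain a b where ab: "a \<in> P1" "b \<in> P2" "p = prod_encode (a,b)" unfolding P_def by auto
      have "{x\<in>Q. e1 x = a} \<inter> {x\<in>Q. e2 x = b} \<in> X"
        using algebra_inter[OF X(1)] X(2,3) ab unfolding fibers_in_def by blast
      moreover have "{x\<in>Q. e x = p} = {x\<in>Q. e1 x = a} \<inter> {x\<in>Q. e2 x = b}"
        unfolding e_def ab(3) by (auto simp: prod_encode_eq)
      ultimately show "{x\<in>Q. e x = p} \<in> X" by simp
    qed
  qed
  ultimately show ?thesis using f1(5) f2(5) by metis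
qed

theorem mainTheorem19:
  fixes Q :: "'q set" and le :: "'q \<Rightarrow> 'q \<Rightarrow> bool"
    and M N :: "('q, 'k::field) pmod"
  assumes "poset_on Q le"
    and "is_pmod Q le M" and "is_pmod Q le N"
    and "finitely_encoded Q le M" and "finitely_encoded Q le N"
  shows "(\<exists>(P::nat set) leP e M'' N''.
            finite P \<and> poset_on P leP \<and> order_preserving Q le P leP e \<and>
            is_pmod P leP M'' \<and> is_pmod P leP N'' \<and>
            pmod_iso Q le M (pullback e M'') \<and> pmod_iso Q le N (pullback e N''))
       \<and> (\<forall>X. algebra_on Q X \<longrightarrow> finitely_encoded_class Q le X M \<longrightarrow>
              finitely_encoded_class Q le X N \<longrightarrow>
            (\<exists>(P::nat set) leP e M'' N''.
               finite P \<and> poset_on P leP \<and> order_preserving Q le P leP e \<and>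
               is_pmod P leP M'' \<and> is_pmod P leP N'' \<and>
               pmod_iso Q le M (pullback e M'') \<and> pmod_iso Q le N (pullback e N'') \<and>
               fibers_in Q X P e))"
proof (intro conjI allI impI)
  obtain P1 l1 e1 M1 where a: "finite_encoding Q le M P1 l1 e1 M1"
    using assms(4) unfolding finitely_encoded_def by blast
  obtain P2 l2 e2 N1 where b: "finite_encoding Q le N P2 l2 e2 N1"
    using assms(5) unfolding finitely_encoded_def by blast
  show "\<exists>(P::nat set) leP e M'' N''.
            finite P \<and> poset_on P leP \<and> order_preserving Q le P leP e \<and>
            is_pmod P leP M'' \<and> is_pmod P leP N'' \<and>
            pmod_iso Q le M (pullback e M'') \<and> pmod_iso Q le N (pullback e N'')"
    using combine[OF a b] by blast
next
  fix X assume X: "algebra_on Q X" "finitely_encoded_class Q le X M" "finitely_encoded_class Q le X N"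
  obtain P1 l1 e1 M1 where a: "finite_encoding Q le M P1 l1 e1 M1" "fibers_in Q X P1 e1"
    using X(2) unfolding finitely_encoded_class_def by blast
  obtain P2 l2 e2 N1 where b: "finite_encoding Q le N P2 l2 e2 N1" "fibers_in Q X P2 e2"
    using X(3) unfolding finitely_encoded_class_def by blast
  show "\<exists>(P::nat set) leP e M'' N''.
               finite P \<and> poset_on P leP \<and> order_preserving Q le P leP e \<and>
               is_pmod P leP M'' \<and> is_pmod P leP N'' \<and>
               pmod_iso Q le M (pullback e M'') \<and> pmod_iso Q le N (pullback e N'') \<and>
               fibers_in Q X P e"
    using combine[OF a(1) b(1)] X(1) a(2) b(2) by blast
qed

end
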